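(* Consider the GVIO system (visual–inertial navigation with raw GNSS from a single constellation) with state $\chi=(\mathbf{T}_i^w,{}^w\mathbf{v}_i,\mathbf{T}_{c_m}^w,{}^w\mathbf{p}_{f_j})$ (IMU pose $\mathbf{T}_i^w=(\mathbf{R}_i^w,{}^w\mathbf{p}_i)\in\mathbb{SE}(3)$, IMU velocity ${}^w\mathbf{v}_i\in\mathbb{R}^3$, cloned camera poses $\mathbf{T}_{c_m}^w\in\mathbb{SE}(3)$, landmark positions ${}^w\mathbf{p}_{f_j}\in\mathbb{R}^3$), process model $$\dot{\mathbf{T}}_i^w=\mathbf{T}_i^w\mathbf{U},\quad {}^w\dot{\mathbf{v}}_i=\mathbf{R}_i^w\tilde{\mathbf{a}}+{}^w\mathbf{g},\quad \dot{\mathbf{T}}_{c_m}^w=0,\quad {}^w\dot{\mathbf{p}}_{f_j}=0,\qquad \mathbf{U}=\begin{bmatrix}\tilde{\boldsymbol{\omega}}^\times & (\mathbf{R}_i^{w})^T{}^w\mathbf{v}_i\\ 0^T&0\end{bmatrix},$$ visual measurements $\mathbf{r}_j^{(m)}=\pi((\mathbf{T}_{c_m}^w)^{-1}{}^w\mathbf{p}_{f_j})$ with $\pi(x_1,x_2,x_3)=(x_1/x_3,x_2/x_3)^T$, and single-differenced GNSS measurements between satellites $k$ and $l$ $$\tilde\rho^{kl}=\|\mathbf{T}_w^{\mathrm{ECEF}}{}^w\mathbf{p}_i-\mathbf{p}^k_{sat}\|-\|\mathbf{T}_w^{\mathrm{ECEF}}{}^w\mathbf{p}_i-\mathbf{p}^l_{sat}\|,\qquad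 \tilde{\dot\rho}^{kl}=-\mathbf{n}_k^T\mathbf{R}_w^{\mathrm{ECEF}}{}^w\mathbf{v}_i+\mathbf{n}_l^T\mathbf{R}_w^{\mathrm{ECEF}}{}^w\mathbf{v}_i,$$ where the unit vectors $\mathbf{n}_k$ are treated as constant. Suppose $N$ satellites are observed, and let $\mathbf{N}_g$ be the matrix whose rows are $(\mathbf{n}_j-\mathbf{n}_{j-1})^T\mathbf{R}_w^{\mathrm{ECEF}}$, $j=2,\dots,N$. If $\dim\operatorname{null}(\mathbf{N}_g)>0$, then the GVIO system has infinitesimal symmetries, i.e. it is infinitesimally invariant under the (restricted) left action of a group $H$. Moreover, if ${}^w\mathbf{g}^\times{}^w\mathbf{p}_i\in\operatorname{null}(\mathbf{N}_g)$ and ${}^w\mathbf{g}^\times{}^w\mathbf{v}_i\in\operatorname{null}(\mathbf{N}_g)$, then $H=\mathbb{SO}_g(2)\ltimes\operatorname{null}(\mathbf{N}_g)$; otherwise $H=\operatorname{null}(\mathbf{N}_g)$ (translations).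
   Context: Notation: $\mathbf{x}^\times$ is the skew-symmetric matrix of $\mathbf{x}\in\mathbb{R}^3$. $\tilde{\boldsymbol\omega},\tilde{\mathbf a}$ are the (unbiased) angular rate and acceleration inputs; ${}^w\mathbf g$ is gravity in the world frame. $\mathbf{T}_w^{\mathrm{ECEF}}\in\mathbb{SE}(3)$ and its rotation $\mathbf{R}_w^{\mathrm{ECEF}}$ are known constants; $\mathbf{p}^k_{sat}$ is the position of satellite $k$ in ECEF and $\mathbf{n}_k$ is the unit vector from the receiver to satellite $k$. $\mathbb{SO}_g(2)$ denotes rotations about the direction of ${}^w\mathbf g$, and $S=\mathbb{SO}_g(2)\ltimes\mathbb{R}^3\subset\mathbb{SE}(3)$. The left action of $\mathbf{T}_S=(\mathbf{R}_S,\mathbf{p}_S)\in S$ on the state is $\mathbf{T}_S\rhd\chi=(\mathbf{T}_S^{-1}\mathbf{T}_i^w,\ \mathbf{R}_S^{-1}{}^w\mathbf{v}_i,\ \mathbf{T}_S^{-1}\mathbf{T}_{c_m}^w,\ \mathbf{T}_S^{-1}{}^w\mathbf{p}_{f_j})$; subgroups $H\subseteq S$ act by restriction (here $\operatorname{null}(\mathbf N_g)\subseteq\mathbb{R}^3$ is viewed as a group of translations). Definition (infinitesimal invariance): a system with state $\chi_t$ on a Lie group $G$, dynamics $\dot\chi_t=f(\chi_t,u_t)$ and discrete observations $y_{t_k}=h(\chi_{t_k})$ is infinitesimally invariant under a left action $\rhd$ of a group $S$ on $G$ if for all $s\in S$, $\rhd_{s*}(\dot\chi_t)=f(s\rhd\chi_t,u_t)$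 (where $\rhd_{s*}$ is the push-forward on tangent bundles) and $\frac{\partial}{\partial s}\big|_{s=\mathrm{id}_S}h(s\rhd\chi_{t_k})=0$, the latter meaning $\frac{d}{d\lambda}\big|_{\lambda=0}h(\exp(\lambda A)\rhd\chi_{t_k})=0$ for all $A$ in the Lie algebra; i.e. observations are unchanged to first order under the action. *)

theory Defs
  imports "HOL-Analysis.Analysis"
begin

text \<open>Skew-symmetric matrix of x: the matrix whose j-th column is x cross e_j,
  so that (skew x) *v y = x cross y.\<close>
definition skew :: "real^3 \<Rightarrow> real^3^3" where
  "skew x = (\<chi> i j. (cross3 x (axis j 1)) $ i)"

text \<open>Elements of SE(3) as pairs (R, p) with R a rotation matrix. The ambient
  space real^3^3 * real^3 is used for tangent vectors.\<close>
type_synonym pose = "(real^3^3) \<times> (real^3)"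

definition SE3 :: "pose set" where
  "SE3 = {(R, p). rotation_matrix R}"

definition pose_mult :: "pose \<Rightarrow> pose \<Rightarrow> pose" where
  "pose_mult T1 T2 = (fst T1 ** fst T2, fst T1 *v snd T2 + snd T1)"

definition pose_inv :: "pose \<Rightarrow> pose" where
  "pose_inv T = (transpose (fst T), - (transpose (fst T) *v snd T))"

definition pose_apply :: "pose \<Rightarrow> real^3 \<Rightarrow> real^3" where
  "pose_apply T x = fst T *v x + snd T"

definition pose_id :: pose where
  "pose_id = (mat 1, 0)"

definition SOg2 :: "real^3 \<Rightarrow> (real^3^3) set" where
  "SOg2 g = {R. rotation_matrix R \<and> R *v g = g}"

text \<open>One-parameter subgroups of a subgroup H: continuous homomorphisms
  gamma : R -> H; these are exactly the curves lambda |-> exp(lambda A), A in Lie(H).\<close>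
definition one_param_subgroup ::
  "('s \<Rightarrow> 's \<Rightarrow> 's) \<Rightarrow> 's set \<Rightarrow> (real \<Rightarrow> 's::topological_space) \<Rightarrow> bool" where
  "one_param_subgroup gmult H \<gamma> \<longleftrightarrow>
     (\<forall>t. \<gamma> t \<in> H) \<and> (\<forall>a b. \<gamma> (a + b) = gmult (\<gamma> a) (\<gamma> b)) \<and> continuous_on UNIV \<gamma>"

text \<open>The push-forward of a tangent vector under
  the (ambient, smooth) map act s is its Frechet derivative.\<close>
definition inf_invariant ::
  "('x::real_normed_vector \<Rightarrow> 'u \<Rightarrow> 'x) \<Rightarrow> 'i set \<Rightarrow> ('i \<Rightarrow> 'x \<Rightarrow> real) \<Rightarrow>
   ('s::topological_space \<Rightarrow> 'x \<Rightarrow> 'x) \<Rightarrow> ('s \<Rightarrow> 's \<Rightarrow> 's) \<Rightarrow> 's set \<Rightarrow> 'x set \<Rightarrow> 'x \<Rightarrow> bool" where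
  "inf_invariant f I h act gmult H G x0 \<longleftrightarrow>
     (\<forall>s\<in>H. \<forall>x\<in>G. \<forall>u. \<exists>D. (act s has_derivative D) (at x) \<and> D (f x u) = f (act s x) u) \<and>
     (\<forall>\<gamma>. one_param_subgroup gmult H \<gamma> \<longrightarrow>
        (\<forall>i\<in>I. ((\<lambda>t. h i (act (\<gamma> t) x0)) has_real_derivative 0) (at 0)))"

text \<open>State: IMU pose, IMU velocity, cloned camera poses (index type 'c),
  landmark positions (index type 'f).\<close>
type_synonym ('c, 'f) gvio_state = "pose \<times> (real^3) \<times> (pose^'c) \<times> ((real^3)^'f)"

definition gvio_states :: "('c::finite, 'f::finite) gvio_state set" where
  "gvio_states = {(Ti, v, Tc, pf). Ti \<in> SE3 \<and> (\<forall>m. Tc $ m \<in> SE3)}"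

definition gvio_f :: "real^3 \<Rightarrow> ('c::finite, 'f::finite) gvio_state \<Rightarrow> (real^3) \<times> (real^3)
    \<Rightarrow> ('c, 'f) gvio_state" where
  "gvio_f g x u = (case x of (Ti, v, Tc, pf) \<Rightarrow> case u of (\<omega>, a) \<Rightarrow>
     ((fst Ti ** skew \<omega>, fst Ti *v (transpose (fst Ti) *v v)),
      fst Ti *v a + g, 0, 0))"

definition gvio_act :: "pose \<Rightarrow> ('c::finite, 'f::finite) gvio_state \<Rightarrow> ('c, 'f) gvio_state" where
  "gvio_act S x = (case x of (Ti, v, Tc, pf) \<Rightarrow>
     (pose_mult (pose_inv S) Ti, transpose (fst S) *v v,
      (\<chi> m. pose_mult (pose_inv S) (Tc $ m)), (\<chi> j. pose_apply (pose_inv S) (pf $ j))))"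

definition proj :: "real^3 \<Rightarrow> real \<times> real" where
  "proj x = (x$1 / x$3, x$2 / x$3)"

datatype ('c, 'f) gvio_obs = VisX 'c 'f | VisY 'c 'f | PR nat nat | Dop nat nat

definition gvio_obs_set :: "nat \<Rightarrow> ('c, 'f) gvio_obs set" where
  "gvio_obs_set N = range (\<lambda>(m, j). VisX m j) \<union> range (\<lambda>(m, j). VisY m j)
     \<union> {PR k l | k l. k \<in> {1..N} \<and> l \<in> {1..N}} \<union> {Dop k l | k l. k \<in> {1..N} \<and> l \<in> {1..N}}"

text \<open>T_w^ECEF = (RE, pE); psat k: satellite positions in ECEF; n k: the (constant)
  unit vectors used in the Doppler model.\<close>
definition gvio_h :: "real^3^3 \<Rightarrow> real^3 \<Rightarrow> (nat \<Rightarrow> real^3) \<Rightarrow> (nat \<Rightarrow> real^3) \<Rightarrow>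
    ('c, 'f) gvio_obs \<Rightarrow> ('c::finite, 'f::finite) gvio_state \<Rightarrow> real" where
  "gvio_h RE pE psat n ob x = (case x of (Ti, v, Tc, pf) \<Rightarrow> (case ob of
      VisX m j \<Rightarrow> fst (proj (pose_apply (pose_inv (Tc $ m)) (pf $ j)))
    | VisY m j \<Rightarrow> snd (proj (pose_apply (pose_inv (Tc $ m)) (pf $ j)))
    | PR k l \<Rightarrow> norm (pose_apply (RE, pE) (snd Ti) - psat k)
                - norm (pose_apply (RE, pE) (snd Ti) - psat l)
    | Dop k l \<Rightarrow> - (n k \<bullet> (RE *v v)) + n l \<bullet> (RE *v v)))"

definition null_Ng :: "real^3^3 \<Rightarrow> (nat \<Rightarrow> real^3) \<Rightarrow> nat \<Rightarrow> (real^3) set" where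
  "null_Ng RE n N = {t. \<forall>j\<in>{2..N}. (n j - n (j - 1)) \<bullet> (RE *v t) = 0}"

definition SOg2_semidir_null :: "real^3 \<Rightarrow> (real^3) set \<Rightarrow> pose set" where
  "SOg2_semidir_null g V = {(R, p). R \<in> SOg2 g \<and> p \<in> V}"

definition translation_group :: "(real^3) set \<Rightarrow> pose set" where
  "translation_group V = {(mat 1, p) | p. p \<in> V}"

end

theory Submission
  imports Defs
begin

lemma bl_mv: "bounded_linear (\<lambda>A::real^'n^'m. A *v x)"
proof -
  have "linear (\<lambda>A::real^'n^'m. A *v x)"
    by (rule linearI) (simp_all add: vec_eq_iff matrix_vector_mult_def sum.distrib sum_distrib_left algebra_simps)
  then show ?thesis by (simp add: linear_conv_bounded_linear)
qed

lemma bl_mml: "bounded_linear (\<lambda>A::real^'n^'m. A ** (B::real^'k^'n))"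
proof -
  have "linear (\<lambda>A::real^'n^'m. A ** B)"
    by (rule linearI) (simp_all add: vec_eq_iff matrix_matrix_mult_def sum.distrib sum_distrib_left algebra_simps)
  then show ?thesis by (simp add: linear_conv_bounded_linear)
qed

lemma bl_mmr: "bounded_linear (\<lambda>B::real^'k^'n. (A::real^'n^'m) ** B)"
proof -
  have "linear (\<lambda>B::real^'k^'n. A ** B)"
    by (rule linearI) (simp_all add: vec_eq_iff matrix_matrix_mult_def sum.distrib sum_distrib_left algebra_simps)
  then show ?thesis by (simp add: linear_conv_bounded_linear)
qed

lemma ftc_at:
  fixes f :: "real \<Rightarrow> 'a::banach"
  assumes cf: "continuous_on UNIV f" and u: "u \<in> {-1<..<2}"
  shows "((\<lambda>x. integral {-1..x} f) has_vector_derivative f u) (at u)"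
proof -
  have "f integrable_on {-1..2}"
    by (rule integrable_continuous_interval) (rule continuous_on_subset[OF cf], simp)
  moreover have "continuous (at u within ({-1..2} - {})) f"
    using cf by (simp add: continuous_on_eq_continuous_within continuous_at_imp_continuous_at_within)
  ultimately have "((\<lambda>x. integral {-1..x} f) has_vector_derivative f u) (at u within ({-1..2} - {}))"
    using u by (intro integral_has_vector_derivative_continuous_at) auto
  moreover have "u \<in> interior {-1..(2::real)}" using u by simp
  then have "at u within ({-1..2} - {}) = at u" using at_within_interior[of u "{-1..2::real}"] by simp
  ultimately show ?thesis by metis
qed

lemma reg:
  fixes R :: "real \<Rightarrow> real^'n^'n" and p :: "real \<Rightarrow> real^'n"
  assumes cR: "continuous_on UNIV R" and cp: "continuous_on UNIV p"
    and hR: "\<And>a b. R (a+b) = R a ** R b" and hp: "\<And>a b. p (a+b) = R a *v p b + p a"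
    and R0: "R 0 = mat 1"
  shows "\<exists>\<Omega> b. (R has_vector_derivative \<Omega>) (at 0) \<and> (p has_vector_derivative b) (at 0)"
proof -
  let ?S = "\<lambda>s. (\<Sum>i\<in>UNIV. \<Sum>j\<in>UNIV. \<bar>(R s - mat 1) $ i $ j\<bar>)"
  have "(R \<longlongrightarrow> R 0) (at 0)" using cR by (simp add: continuous_on_def)
  then have "(?S \<longlongrightarrow> ?S 0) (at 0)" by (intro tendsto_intros)
  then have "(?S \<longlongrightarrow> 0) (at 0)" by (simp add: R0)
  then have "eventually (\<lambda>s. ?S s < 1/2) (at 0)" by (rule order_tendstoD) simp
  then obtain d where d0: "d > 0" and dS: "\<And>s. s \<noteq> 0 \<Longrightarrow> dist s 0 < d \<Longrightarrow> ?S s < 1/2"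
    by (auto simp: eventually_at)
  define \<delta> where "\<delta> = min (d/2) 1"
  have \<delta>0: "\<delta> > 0" and \<delta>1: "\<delta> \<le> 1" and \<delta>d: "\<delta> < d" using d0 by (auto simp: \<delta>_def)
  have nb: "norm ((R s - mat 1) *v x) \<le> norm x / 2" if s: "s \<in> {0..\<delta>}" for s x
  proof -
    have "?S s \<le> 1/2"
    proof (cases "s = 0")
      case True then show ?thesis by (simp add: R0)
    next
      case False then show ?thesis using dS[of s] s \<delta>d by (auto simp: dist_real_def)
    qed
    have "norm ((R s - mat 1) *v x) \<le> onorm ((*v) (R s - mat 1)) * norm x"
      by (rule onorm) (rule matrix_vector_mul_bounded_linear)
    also have "\<dots> \<le> ?S s * norm x"
      by (rule mult_right_mono[OF onorm_le_matrix_component_sum]) simp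
    also have "\<dots> \<le> 1/2 * norm x" by (rule mult_right_mono[OF \<open>?S s \<le> 1/2\<close>]) simp
    finally show ?thesis by simp
  qed
  have intR: "R integrable_on {a..b}" for a b
    by (rule integrable_continuous_interval) (rule continuous_on_subset[OF cR], simp)
  have intp: "p integrable_on {a..b}" for a b
    by (rule integrable_continuous_interval) (rule continuous_on_subset[OF cp], simp)
  define M where "M = integral {0..\<delta>} R"
  have hM: "(R has_integral M) {0..\<delta>}" unfolding M_def by (rule integrable_integral[OF intR])
  have Mx: "((\<lambda>s. R s *v x) has_integral M *v x) {0..\<delta>}" for x
    using has_integral_linear[OF hM bl_mv[of x]] by (simp add: o_def)
  have inj: "x = 0" if "M *v x = 0" for x
  proof -
    have hi: "((\<lambda>s. x - R s *v x) has_integral (\<delta> *\<^sub>R x - M *v x)) {0..\<delta>}"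
      using has_integral_diff[OF has_integral_const_real[of x 0 \<delta>] Mx[of x]] \<delta>0 by simp
    have "norm (\<delta> *\<^sub>R x - M *v x) \<le> (norm x / 2) * Henstock_Kurzweil_Integration.content {0..\<delta>}"
    proof (rule has_integral_bound_real[where S="{}", OF _ _ hi])
      fix s assume "s \<in> {0..\<delta>} - {}"
      then have "norm ((R s - mat 1) *v x) \<le> norm x / 2" by (intro nb) auto
      moreover have "x - R s *v x = - ((R s - mat 1) *v x)"
        by (simp add: matrix_vector_mult_diff_rdistrib)
      ultimately show "norm (x - R s *v x) \<le> norm x / 2" by simp
    qed auto
    then have "\<delta> * norm x \<le> norm x / 2 * \<delta>" using that \<delta>0 by simp
    then have "norm x \<le> 0" using \<delta>0 by (simp add: field_simps)
    then show ?thesis by simp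
  qed
  then have "inj ((*v) M)" by (simp add: vec.inj_iff_eq_0)
  then obtain Minv where "Minv ** M = mat 1" using matrix_left_invertible_injective by blast
  then have MMinv: "M ** Minv = mat 1" by (simp add: matrix_left_right_inverse)
  define P where "P = integral {0..\<delta>} p"
  have hP: "(p has_integral P) {0..\<delta>}" unfolding P_def by (rule integrable_integral[OF intp])
  define \<Phi> where "\<Phi> = (\<lambda>u. integral {-1..u} R)"
  define \<Psi> where "\<Psi> = (\<lambda>u. integral {-1..u} p)"
  have shift: "(\<lambda>s. R t ** R s) = R \<circ> (+) t" "(\<lambda>s. R t *v p s + p t) = p \<circ> (+) t" for t
    by (auto simp: hR hp)
  have eqR: "\<Phi> (t + \<delta>) - \<Phi> t = R t ** M" and eqp: "\<Psi> (t + \<delta>) - \<Psi> t = R t *v P + \<delta> *\<^sub>R p t"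
    if t: "t \<in> {-1<..<1}" for t
  proof -
    have "integral {-1..t} R + integral {t..t+\<delta>} R = integral {-1..t+\<delta>} R"
      using t \<delta>0 by (intro Henstock_Kurzweil_Integration.integral_combine intR) auto
    moreover have "integral {t..t+\<delta>} R = integral {0..\<delta>} (R \<circ> (+) t)"
      using integral_shift_Icc_real[of 0 \<delta> R t] by (simp add: add.commute)
    moreover have "((\<lambda>s. R t ** R s) has_integral R t ** M) {0..\<delta>}"
      using has_integral_linear[OF hM bl_mmr[of "R t"]] by (simp add: o_def)
    ultimately show "\<Phi> (t + \<delta>) - \<Phi> t = R t ** M"
      by (simp add: \<Phi>_def shift integral_unique algebra_simps)
  next
    have "integral {-1..t} p + integral {t..t+\<delta>} p = integral {-1..t+\<delta>} p"
      using t \<delta>0 by (intro Henstock_Kurzweil_Integration.integral_combine intp) auto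
    moreover have "integral {t..t+\<delta>} p = integral {0..\<delta>} (p \<circ> (+) t)"
      using integral_shift_Icc_real[of 0 \<delta> p t] by (simp add: add.commute)
    moreover have "((\<lambda>s. R t *v p s + p t) has_integral R t *v P + \<delta> *\<^sub>R p t) {0..\<delta>}"
      using has_integral_add[OF has_integral_linear[OF hP matrix_vector_mul_bounded_linear[of "R t"]]
           has_integral_const_real[of "p t" 0 \<delta>]] \<delta>0 by (simp add: o_def)
    then have "integral {0..\<delta>} (p \<circ> (+) t) = R t *v P + \<delta> *\<^sub>R p t"
      unfolding shift(2)[of t, symmetric] by (rule integral_unique)
    ultimately show "\<Psi> (t + \<delta>) - \<Psi> t = R t *v P + \<delta> *\<^sub>R p t"
      unfolding \<Psi>_def by (metis add_diff_cancel_left')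
  qed
  have dshift: "((\<lambda>t. F (t + \<delta>) - F t) has_vector_derivative f \<delta> - f 0) (at 0)"
    if F: "\<And>u. u \<in> {-1<..<2} \<Longrightarrow> (F has_vector_derivative f u) (at u)" for F :: "real \<Rightarrow> 'b::real_normed_vector" and f
  proof -
    have "((\<lambda>t. t + \<delta>) has_vector_derivative 1) (at 0)"
      by (auto intro!: derivative_eq_intros)
    moreover have "(F has_vector_derivative f \<delta>) (at ((\<lambda>t. t + \<delta>) 0))" using F \<delta>0 \<delta>1 by simp
    ultimately have "(F \<circ> (\<lambda>t. t + \<delta>) has_vector_derivative 1 *\<^sub>R f \<delta>) (at 0)"
      by (rule vector_diff_chain_at)
    then show ?thesis using F[of 0] by (intro has_vector_derivative_diff) (auto simp: o_def)
  qed
  have dPhi: "((\<lambda>t. \<Phi> (t + \<delta>) - \<Phi> t) has_vector_derivative R \<delta> - R 0) (at 0)"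
    by (rule dshift) (unfold \<Phi>_def, rule ftc_at[OF cR])
  have dPsi: "((\<lambda>t. \<Psi> (t + \<delta>) - \<Psi> t) has_vector_derivative p \<delta> - p 0) (at 0)"
    by (rule dshift) (unfold \<Psi>_def, rule ftc_at[OF cp])
  have "((\<lambda>t. (\<Phi> (t + \<delta>) - \<Phi> t) ** Minv) has_vector_derivative (R \<delta> - R 0) ** Minv) (at 0)"
    by (rule bounded_linear.has_vector_derivative[OF bl_mml dPhi])
  then have dR: "(R has_vector_derivative (R \<delta> - R 0) ** Minv) (at 0)"
  proof (rule has_vector_derivative_transform_within_open[where S="{-1<..<1}"])
    fix y :: real assume "y \<in> {-1<..<1}"
    then show "(\<Phi> (y + \<delta>) - \<Phi> y) ** Minv = R y"
      by (simp add: eqR matrix_mul_assoc[symmetric] MMinv matrix_mul_rid)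
  qed auto
  have "((\<lambda>t. (1/\<delta>) *\<^sub>R ((\<Psi> (t + \<delta>) - \<Psi> t) - R t *v P)) has_vector_derivative
          (1/\<delta>) *\<^sub>R ((p \<delta> - p 0) - ((R \<delta> - R 0) ** Minv) *v P)) (at 0)"
    by (intro bounded_linear.has_vector_derivative[OF bounded_linear_scaleR_right] has_vector_derivative_diff dPsi
          bounded_linear.has_vector_derivative[OF bl_mv dR])
  then have dp: "(p has_vector_derivative (1/\<delta>) *\<^sub>R ((p \<delta> - p 0) - ((R \<delta> - R 0) ** Minv) *v P)) (at 0)"
  proof (rule has_vector_derivative_transform_within_open[where S="{-1<..<1}"])
    fix y :: real assume "y \<in> {-1<..<1}"
    then show "(1/\<delta>) *\<^sub>R ((\<Psi> (y + \<delta>) - \<Psi> y) - R y *v P) = p y"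
    proof -
      assume y: "y \<in> {-1<..<1}"
      have "(\<Psi> (y + \<delta>) - \<Psi> y) - R y *v P = \<delta> *\<^sub>R p y" using eqp[OF y] by simp
      then show ?thesis using \<delta>0 by simp
    qed
  qed simp_all
  from dR dp show ?thesis by (intro exI conjI)
qed

lemma vec_lambda_add: "(\<chi> i. f i) + (\<chi> i. g i) = (\<chi> i. f i + g i)"
  by (simp add: vec_eq_iff)

lemma vec_lambda_scaleR: "c *\<^sub>R (\<chi> i. f i) = (\<chi> i. c *\<^sub>R f i)"
  by (simp add: vec_eq_iff)

lemma dyn_inv:
  fixes R :: "real^3^3" and x :: "('c::finite, 'f::finite) gvio_state"
  assumes orth: "orthogonal_matrix R" and Rg: "R *v g = g"
  shows "\<exists>D. (gvio_act (R, p) has_derivative D) (at x) \<and> D (gvio_f g x u) = gvio_f g (gvio_act (R, p) x) u"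
proof -
  let ?T = "transpose R"
  define D :: "('c, 'f) gvio_state \<Rightarrow> ('c, 'f) gvio_state" where
    "D = (\<lambda>(Ti, v, Tc, pf). ((?T ** fst Ti, ?T *v snd Ti), ?T *v v,
          (\<chi> m. (?T ** fst (Tc$m), ?T *v snd (Tc$m))), (\<chi> j. ?T *v (pf$j))))"
  define c :: "('c, 'f) gvio_state" where
    "c = ((0, -(?T *v p)), 0, (\<chi> m. (0, -(?T *v p))), (\<chi> j. -(?T *v p)))"
  have act: "gvio_act (R, p) = (\<lambda>y. D y + c)"
    by (auto simp: fun_eq_iff gvio_act_def D_def c_def pose_mult_def pose_inv_def pose_apply_def
        vec_eq_iff matrix_vector_mult_diff_distrib split: prod.splits)
  have lin: "linear D"
    by (rule linearI) (auto simp: D_def vec_lambda_add vec_lambda_scaleR matrix_add_ldistrib matrix_vector_right_distrib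
        matrix_scalar_ac scalar_matrix_assoc matrix_vector_mult_scaleR simp del: transpose_matrix_vector split: prod.splits)
  then have bl: "bounded_linear D" by (simp add: linear_conv_bounded_linear)
  have der: "(gvio_act (R, p) has_derivative D) (at x)"
    unfolding act by (rule has_derivative_add_const[OF bounded_linear_imp_has_derivative[OF bl]])
  have TR: "?T ** R = mat 1" and RT: "R ** ?T = mat 1" using orth by (auto simp: orthogonal_matrix_def)
  have Tg: "?T *v g = g"
    by (metis Rg TR matrix_vector_mul_assoc matrix_vector_mul_lid)
  have RT2: "A ** R ** ?T = A" for A :: "real^3^3"
    by (metis matrix_mul_assoc RT matrix_mul_rid)
  obtain Ti v Tc pf where x: "x = (Ti, v, Tc, pf)" by (cases x) auto
  obtain \<omega> a where u: "u = (\<omega>, a)" by (cases u) auto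
  have "D (gvio_f g x u) = gvio_f g (gvio_act (R, p) x) u"
    by (simp add: x u D_def gvio_f_def gvio_act_def pose_mult_def pose_inv_def vec_eq_iff
        matrix_mul_assoc matrix_vector_mul_assoc matrix_transpose_mul RT Tg RT2 zero_prod_def
        matrix_vector_right_distrib del: transpose_matrix_vector)
  with der show ?thesis by blast
qed

lemma skew_mv: "skew g *v y = cross3 g y"
  by (simp add: vec_eq_iff forall_3 skew_def matrix_vector_mult_def sum_3 cross3_simps axis_def)

lemma omega_form:
  fixes R :: "real \<Rightarrow> real^3^3"
  assumes orth: "\<And>t. transpose (R t) ** R t = mat 1" and Rg: "\<And>t. R t *v g = g"
    and dR: "(R has_vector_derivative \<Omega>) (at 0)" and R0: "R 0 = mat 1" and g0: "g \<noteq> 0"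
  shows "\<exists>c. \<forall>y. \<Omega> *v y = c *\<^sub>R cross3 g y"
proof -
  have dRx: "((\<lambda>t. R t *v x) has_vector_derivative \<Omega> *v x) (at 0)" for x
    using bounded_linear.has_vector_derivative[OF bl_mv dR] .
  have "((\<lambda>t. R t *v g) has_vector_derivative 0) (at 0)" by (simp add: Rg)
  then have Og: "\<Omega> *v g = 0" using dRx[of g] vector_derivative_unique_at by blast
  have ic: "(R t *v x) \<bullet> (R t *v y) = x \<bullet> y" for t x y
  proof -
    have "(R t *v x) \<bullet> (R t *v y) = (x v* transpose (R t)) \<bullet> (R t *v y)"
      by (metis transpose_matrix_vector transpose_transpose)
    also have "\<dots> = x \<bullet> (transpose (R t) *v (R t *v y))" by (rule dot_lmul_matrix)
    also have "\<dots> = x \<bullet> y" by (simp add: matrix_vector_mul_assoc orth del: transpose_matrix_vector)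
    finally show ?thesis .
  qed
  have sk: "(\<Omega> *v x) \<bullet> y + x \<bullet> (\<Omega> *v y) = 0" for x y
  proof -
    have "((\<lambda>t. (R t *v x) \<bullet> (R t *v y)) has_derivative
           (\<lambda>h. (R 0 *v x) \<bullet> (h *\<^sub>R (\<Omega> *v y)) + (h *\<^sub>R (\<Omega> *v x)) \<bullet> (R 0 *v y))) (at 0)"
      using has_derivative_inner[OF dRx[of x, unfolded has_vector_derivative_def]
                                    dRx[of y, unfolded has_vector_derivative_def]] by simp
    moreover have "((\<lambda>t. (R t *v x) \<bullet> (R t *v y)) has_derivative (\<lambda>h. 0)) (at 0)"
      by (simp add: ic)
    ultimately have "(\<lambda>h. (R 0 *v x) \<bullet> (h *\<^sub>R (\<Omega> *v y)) + (h *\<^sub>R (\<Omega> *v x)) \<bullet> (R 0 *v y)) = (\<lambda>h. 0)"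
      by (rule has_derivative_unique)
    then have "(R 0 *v x) \<bullet> (1 *\<^sub>R (\<Omega> *v y)) + (1 *\<^sub>R (\<Omega> *v x)) \<bullet> (R 0 *v y) = 0"
      by meson
    then show ?thesis by (simp add: R0 add.commute)
  qed
  have comp: "\<Omega> $ i $ j = (\<Omega> *v axis j 1) \<bullet> axis i 1" for i j
    by (simp add: inner_axis matrix_vector_mult_basis column_def)
  have comp2: "\<Omega> $ j $ i = axis j 1 \<bullet> (\<Omega> *v axis i 1)" for i j
    by (simp add: inner_axis' matrix_vector_mult_basis column_def)
  have anti: "\<Omega> $ i $ j = - \<Omega> $ j $ i" for i j
    using sk[of "axis j 1" "axis i 1"] comp[where i=i and j=j] comp2[where i=i and j=j] by simp
  have diag: "\<Omega> $ i $ i = 0" for i using anti[of i i] by simp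
  define w :: "real^3" where "w = vector [\<Omega>$3$2, \<Omega>$1$3, \<Omega>$2$1]"
  have Ow: "\<Omega> *v y = cross3 w y" for y
    using anti[of 1 2] anti[of 1 3] anti[of 2 3]
    by (simp add: vec_eq_iff forall_3 matrix_vector_mult_def sum_3 cross3_simps w_def diag)
  have "cross3 w g = 0" using Og Ow by simp
  then have "collinear {0, g, w}" by (simp add: cross_eq_0 insert_commute)
  then have "w = 0 \<or> (\<exists>c. w = c *\<^sub>R g)" using g0 collinear_lemma by blast
  then obtain c where "w = c *\<^sub>R g" by (metis scale_zero_left)
  then show ?thesis by (auto simp: Ow cross_mult_left)
qed

lemma V_add: "a \<in> null_Ng RE n N \<Longrightarrow> b \<in> null_Ng RE n N \<Longrightarrow> a + b \<in> null_Ng RE n N"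
  by (simp add: null_Ng_def matrix_vector_right_distrib inner_add_right)

lemma V_scale: "a \<in> null_Ng RE n N \<Longrightarrow> c *\<^sub>R a \<in> null_Ng RE n N"
  by (simp add: null_Ng_def matrix_vector_mult_scaleR)

lemma V_neg: "a \<in> null_Ng RE n N \<Longrightarrow> - a \<in> null_Ng RE n N"
  using V_scale[of a RE n N "-1"] by simp

lemma V_eq: "t \<in> null_Ng RE n N \<Longrightarrow> k \<in> {1..N} \<Longrightarrow> n k \<bullet> (RE *v t) = n 1 \<bullet> (RE *v t)"
proof (induction k)
  case 0 then show ?case by simp
next
  case (Suc k)
  show ?case
  proof (cases "k = 0")
    case True then show ?thesis by simp
  next
    case False
    then have "Suc k \<in> {2..N}" using Suc.prems by auto
    then have "(n (Suc k) - n (Suc k - 1)) \<bullet> (RE *v t) = 0" using Suc.prems(1) unfolding null_Ng_def by blast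
    then have "(n (Suc k) - n k) \<bullet> (RE *v t) = 0" by simp
    moreover have "n k \<bullet> (RE *v t) = n 1 \<bullet> (RE *v t)" using Suc False by auto
    ultimately show ?thesis by (simp add: inner_diff_left)
  qed
qed

lemma V_deriv:
  assumes d: "(p has_vector_derivative b) (at 0)" and pV: "\<And>t. p t \<in> null_Ng RE n N"
  shows "b \<in> null_Ng RE n N"
  unfolding null_Ng_def
proof (rule CollectI, rule ballI)
  fix j assume "j \<in> {2..N}"
  let ?a = "n j - n (j - 1)"
  have bl: "bounded_linear (\<lambda>y. ?a \<bullet> (RE *v y))"
    by (rule bounded_linear_compose[OF bounded_linear_inner_right matrix_vector_mul_bounded_linear])
  have "((\<lambda>t. ?a \<bullet> (RE *v p t)) has_vector_derivative ?a \<bullet> (RE *v b)) (at 0)"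
    by (rule bounded_linear.has_vector_derivative[OF bl d])
  moreover have "(\<lambda>t. ?a \<bullet> (RE *v p t)) = (\<lambda>t. 0)"
    using pV \<open>j \<in> {2..N}\<close> by (auto simp: null_Ng_def)
  ultimately have "((\<lambda>t. 0::real) has_vector_derivative ?a \<bullet> (RE *v b)) (at 0)" by simp
  then show "?a \<bullet> (RE *v b) = 0"
    using vector_derivative_unique_at has_vector_derivative_const by blast
qed

lemma normder:
  fixes z :: "real \<Rightarrow> 'a::real_inner"
  assumes dz: "(z has_vector_derivative z') (at 0)" and z0: "z 0 \<noteq> 0"
  shows "((\<lambda>t. norm (z t)) has_real_derivative (z' \<bullet> sgn (z 0))) (at 0)"
proof -
  have "((\<lambda>t. norm (z t)) has_derivative (\<lambda>h. (h *\<^sub>R z') \<bullet> sgn (z 0))) (at 0)"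
    using has_derivative_compose[OF dz[unfolded has_vector_derivative_def] has_derivative_norm[OF z0]] .
  moreover have "(\<lambda>h. (h *\<^sub>R z') \<bullet> sgn (z 0)) = (*) (z' \<bullet> sgn (z 0))" by (auto simp: fun_eq_iff)
  ultimately show ?thesis by (simp add: has_field_derivative_def)
qed

lemma vis_inv:
  assumes "R ** transpose R = mat 1"
  shows "pose_apply (pose_inv (pose_mult (pose_inv (R, p)) T)) (pose_apply (pose_inv (R, p)) y)
       = pose_apply (pose_inv T) y"
proof -
  have RT2: "A ** R ** transpose R = A" for A :: "real^3^3"
    by (metis matrix_mul_assoc assms matrix_mul_rid)
  show ?thesis
    by (simp add: pose_apply_def pose_inv_def pose_mult_def matrix_transpose_mul
      matrix_vector_mul_assoc RT2 matrix_vector_right_distrib matrix_vector_mult_diff_distrib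
      del: transpose_matrix_vector)
qed

lemma mv_neg: "(A::real^'n^'m) *v (- x) = - (A *v x)"
  by (simp add: vec_eq_iff matrix_vector_mult_def sum_negf)

theorem proposition2:
  fixes g :: "real^3" and RE :: "real^3^3" and pE :: "real^3"
    and psat n :: "nat \<Rightarrow> real^3" and N :: nat
    and x0 :: "('c::finite, 'f::finite) gvio_state"
  assumes g_nz: "g \<noteq> 0"
    and RE_rot: "rotation_matrix RE"
    and x0_G: "x0 \<in> gvio_states"
    and recv_ne: "\<forall>k\<in>{1..N}. psat k \<noteq> pose_apply (RE, pE) (snd (fst x0))"
    and n_def: "\<forall>k\<in>{1..N}. n k = (psat k - pose_apply (RE, pE) (snd (fst x0)))
                      /\<^sub>R norm (psat k - pose_apply (RE, pE) (snd (fst x0)))"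
    and null_pos: "dim (null_Ng RE n N) > 0"
  shows "(let H = (if skew g *v snd (fst x0) \<in> null_Ng RE n N
                     \<and> skew g *v fst (snd x0) \<in> null_Ng RE n N
                   then SOg2_semidir_null g (null_Ng RE n N)
                   else translation_group (null_Ng RE n N))
          in (\<exists>s\<in>H. s \<noteq> pose_id) \<and>
             inf_invariant (gvio_f g) (gvio_obs_set N) (gvio_h RE pE psat n)
               gvio_act pose_mult H gvio_states x0)"
proof -
  define V where "V = null_Ng RE n N"
  define C where "C \<longleftrightarrow> skew g *v snd (fst x0) \<in> V \<and> skew g *v fst (snd x0) \<in> V"
  define H where "H = (if C then SOg2_semidir_null g V else translation_group V)"
  have rot1: "rotation_matrix (mat 1 :: real^3^3)"
    by (simp add: rotation_matrix_def orthogonal_matrix_id det_I)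
  have HS: "H \<subseteq> SOg2_semidir_null g V"
    using rot1 by (auto simp: H_def translation_group_def SOg2_semidir_null_def SOg2_def)
  have Htr: "fst s = mat 1" if "\<not> C" "s \<in> H" for s
    using that by (auto simp: H_def translation_group_def)
  have ne: "\<exists>s\<in>H. s \<noteq> pose_id"
  proof -
    have "\<not> V \<subseteq> {0}" using null_pos unfolding V_def
      by (metis bot.extremum dim_empty dim_subset le_zero_eq subset_singletonD dim_singleton neq0_conv)
    then obtain z where z: "z \<in> V" "z \<noteq> 0" by auto
    have "(mat 1, z) \<in> H"
      using z rot1 by (auto simp: H_def translation_group_def SOg2_semidir_null_def SOg2_def)
    moreover have "(mat 1, z) \<noteq> pose_id" using z by (simp add: pose_id_def)
    ultimately show ?thesis by blast
  qed
  have dyn1: "\<exists>D. (gvio_act s has_derivative D) (at x) \<and> D (gvio_f g x u) = gvio_f g (gvio_act s x) u"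
    if sH: "s \<in> H" for s and x :: "('c, 'f) gvio_state" and u
  proof -
    from sH have "s \<in> SOg2_semidir_null g V" using HS by auto
    then obtain R p where s: "s = (R, p)" and "rotation_matrix R" and Rg: "R *v g = g"
      by (auto simp: SOg2_semidir_null_def SOg2_def)
    then have "orthogonal_matrix R" by (simp add: rotation_matrix_def)
    from dyn_inv[OF this Rg, of p x u] show ?thesis by (simp add: s)
  qed
  have dyn: "\<forall>s\<in>H. \<forall>x\<in>(gvio_states :: ('c, 'f) gvio_state set). \<forall>u. \<exists>D. (gvio_act s has_derivative D) (at x) \<and>
               D (gvio_f g x u) = gvio_f g (gvio_act s x) u"
    using dyn1 by blast
  have obs: "\<forall>i\<in>(gvio_obs_set N :: ('c, 'f) gvio_obs set). ((\<lambda>t. gvio_h RE pE psat n i (gvio_act (\<gamma> t) x0)) has_real_derivative 0) (at 0)"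
    if op: "one_param_subgroup pose_mult H \<gamma>" for \<gamma>
  proof -
    define R where "R = (\<lambda>t. fst (\<gamma> t))"
    define p where "p = (\<lambda>t. snd (\<gamma> t))"
    have \<gamma>H: "\<gamma> t \<in> H" for t using op by (simp add: one_param_subgroup_def)
    have \<gamma>eq: "\<gamma> t = (R t, p t)" for t by (simp add: R_def p_def)
    have inS: "\<gamma> t \<in> SOg2_semidir_null g V" for t using \<gamma>H HS by auto
    have Rrot: "rotation_matrix (R t)" and Rg: "R t *v g = g" and pV: "p t \<in> V" for t
      using inS[of t] by (auto simp: SOg2_semidir_null_def SOg2_def \<gamma>eq)
    have TR: "transpose (R t) ** R t = mat 1" and RT: "R t ** transpose (R t) = mat 1" for t
      using Rrot[of t] by (auto simp: rotation_matrix_def orthogonal_matrix_def)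
    have hom: "\<gamma> (a + b) = pose_mult (\<gamma> a) (\<gamma> b)" for a b using op by (simp add: one_param_subgroup_def)
    have hR: "R (a + b) = R a ** R b" and hp: "p (a + b) = R a *v p b + p a" for a b
      using hom[of a b] by (simp_all add: \<gamma>eq pose_mult_def)
    have c\<gamma>: "continuous_on UNIV \<gamma>" using op by (simp add: one_param_subgroup_def)
    have cR: "continuous_on UNIV R" unfolding R_def by (rule continuous_on_fst[OF c\<gamma>])
    have cp: "continuous_on UNIV p" unfolding p_def by (rule continuous_on_snd[OF c\<gamma>])
    have R0: "R 0 = mat 1"
    proof -
      have "R 0 = R 0 ** R 0" using hR[of 0 0] by simp
      then have "transpose (R 0) ** R 0 = transpose (R 0) ** (R 0 ** R 0)" by simp
      then show ?thesis by (simp add: matrix_mul_assoc TR matrix_mul_lid)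
    qed
    have p0: "p 0 = 0" using hp[of 0 0] by (simp add: R0)
    obtain \<Omega> b where dR: "(R has_vector_derivative \<Omega>) (at 0)" and dp: "(p has_vector_derivative b) (at 0)"
      using reg[OF cR cp hR hp R0] by blast
    have bV: "b \<in> V" unfolding V_def by (rule V_deriv[OF dp]) (use pV V_def in auto)
    obtain Ri pi v Tc pf where x0: "x0 = ((Ri, pi), v, Tc, pf)" by (cases x0) auto
    have \<Omega>V: "\<Omega> *v pi \<in> V \<and> \<Omega> *v v \<in> V"
    proof (cases C)
      case True
      obtain c where c: "\<And>y. \<Omega> *v y = c *\<^sub>R cross3 g y"
        using omega_form[OF TR Rg dR R0 g_nz] by blast
      show ?thesis using True unfolding C_def V_def
        by (simp add: c skew_mv[symmetric] V_scale x0)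
    next
      case False
      have "R t = mat 1" for t using Htr[OF False \<gamma>H[of t]] by (simp add: \<gamma>eq)
      then have "R = (\<lambda>t. mat 1)" by auto
      then have "(R has_vector_derivative 0) (at 0)" by simp
      then have "\<Omega> = 0" using dR vector_derivative_unique_at by blast
      then show ?thesis by (simp add: V_def null_Ng_def)
    qed
    have Rinv: "R (- t) = transpose (R t)" for t
    proof -
      have "R t ** R (- t) = mat 1" using hR[of t "-t"] by (simp add: R0)
      then have "transpose (R t) ** (R t ** R (- t)) = transpose (R t)" by simp
      then show ?thesis by (simp add: matrix_mul_assoc TR matrix_mul_lid)
    qed
    have pinv: "transpose (R t) *v p t = - p (- t)" for t
    proof -
      have "R t *v p (- t) = - p t" using hp[of t "-t"] by (simp add: p0 eq_neg_iff_add_eq_0)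
      then have "transpose (R t) *v (R t *v p (- t)) = transpose (R t) *v (- p t)" by simp
      then show ?thesis
        by (simp add: matrix_vector_mul_assoc TR mv_neg[symmetric]
                 del: transpose_matrix_vector)
    qed
    define q where "q = (\<lambda>t. R (- t) *v pi + p (- t))"
    define w where "w = (\<lambda>t. R (- t) *v v)"
    define d where "d = \<Omega> *v pi + b"
    define e where "e = \<Omega> *v v"
    have dV: "d \<in> V" using \<Omega>V bV by (simp add: d_def V_def V_add)
    have eV: "e \<in> V" using \<Omega>V by (simp add: e_def)
    have q0: "q 0 = pi" by (simp add: q_def R0 p0)
    have mder: "((\<lambda>t::real. - t) has_vector_derivative -1) (at 0)"
      using has_vector_derivative_minus[OF has_vector_derivative_id] by simp
    have dq: "(q has_vector_derivative - d) (at 0)"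
    proof -
      have "((\<lambda>s. R s *v pi + p s) has_vector_derivative d) (at ((\<lambda>t. - t) 0))"
        unfolding d_def by (simp add: has_vector_derivative_add bounded_linear.has_vector_derivative[OF bl_mv dR] dp)
      with vector_diff_chain_at[OF mder] have
        "((\<lambda>s. R s *v pi + p s) \<circ> (\<lambda>t. - t) has_vector_derivative (-1) *\<^sub>R d) (at 0)"
        by simp
      then show ?thesis by (simp add: q_def o_def)
    qed
    have dw: "(w has_vector_derivative - e) (at 0)"
    proof -
      have "((\<lambda>s. R s *v v) has_vector_derivative e) (at ((\<lambda>t. - t) 0))"
        unfolding e_def by (simp add: bounded_linear.has_vector_derivative[OF bl_mv dR])
      with vector_diff_chain_at[OF mder] have
        "((\<lambda>s. R s *v v) \<circ> (\<lambda>t. - t) has_vector_derivative (-1) *\<^sub>R e) (at 0)"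
        by simp
      then show ?thesis by (simp add: w_def o_def)
    qed
    have sndq: "snd (pose_mult (pose_inv (\<gamma> t)) (Ri, pi)) = q t" for t
      by (simp add: pose_mult_def pose_inv_def \<gamma>eq q_def Rinv pinv del: transpose_matrix_vector)
    have wq: "transpose (fst (\<gamma> t)) *v v = w t" for t
      by (simp add: w_def Rinv \<gamma>eq del: transpose_matrix_vector)
    have Neq: "n k \<bullet> (RE *v y) = n l \<bullet> (RE *v y)" if "y \<in> V" "k \<in> {1..N}" "l \<in> {1..N}" for y k l
      using V_eq[of y RE n N k] V_eq[of y RE n N l] that by (simp add: V_def)
    show ?thesis
    proof
      fix i :: "('c, 'f) gvio_obs" assume i: "i \<in> gvio_obs_set N"
      show "((\<lambda>t. gvio_h RE pE psat n i (gvio_act (\<gamma> t) x0)) has_real_derivative 0) (at 0)"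
      proof (cases i)
        case (VisX m j)
        have "gvio_h RE pE psat n i (gvio_act (\<gamma> t) x0) = gvio_h RE pE psat n i x0" for t
          by (simp add: VisX x0 gvio_h_def gvio_act_def \<gamma>eq vis_inv[OF RT])
        then show ?thesis by simp
      next
        case (VisY m j)
        have "gvio_h RE pE psat n i (gvio_act (\<gamma> t) x0) = gvio_h RE pE psat n i x0" for t
          by (simp add: VisY x0 gvio_h_def gvio_act_def \<gamma>eq vis_inv[OF RT])
        then show ?thesis by simp
      next
        case (PR k l)
        have kl: "k \<in> {1..N}" "l \<in> {1..N}" using i by (auto simp: PR gvio_obs_set_def)
        define X where "X = RE *v pi + pE"
        have fe: "(\<lambda>t. gvio_h RE pE psat n i (gvio_act (\<gamma> t) x0)) =
              (\<lambda>t. norm (RE *v q t + pE - psat k) - norm (RE *v q t + pE - psat l))"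
          by (simp add: fun_eq_iff PR x0 gvio_h_def gvio_act_def sndq pose_apply_def)
        have one: "((\<lambda>t. norm (RE *v q t + pE - psat j)) has_real_derivative n j \<bullet> (RE *v d)) (at 0)"
          if j: "j \<in> {1..N}" for j
        proof -
          have dz: "((\<lambda>t. RE *v q t + pE - psat j) has_vector_derivative RE *v (- d)) (at 0)"
            using bounded_linear.has_vector_derivative[OF matrix_vector_mul_bounded_linear dq]
            by (auto intro!: derivative_eq_intros)
          have z0: "RE *v q 0 + pE - psat j \<noteq> 0"
            using recv_ne j by (auto simp: q0 x0 pose_apply_def)
          have "(RE *v (- d)) \<bullet> sgn (RE *v q 0 + pE - psat j) = n j \<bullet> (RE *v d)"
          proof -
            have "sgn (RE *v q 0 + pE - psat j) = - n j"
              using n_def j by (simp add: q0 x0 pose_apply_def sgn_div_norm norm_minus_commute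
                   scaleR_right_diff_distrib algebra_simps)
            then show ?thesis by (simp add: mv_neg inner_commute)
          qed
          with normder[OF dz z0] show ?thesis by simp
        qed
        have "((\<lambda>t. norm (RE *v q t + pE - psat k) - norm (RE *v q t + pE - psat l)) has_real_derivative
               n k \<bullet> (RE *v d) - n l \<bullet> (RE *v d)) (at 0)"
          by (rule DERIV_diff[OF one[OF kl(1)] one[OF kl(2)]])
        then show ?thesis unfolding fe using Neq[OF dV kl] by simp
      next
        case (Dop k l)
        have kl: "k \<in> {1..N}" "l \<in> {1..N}" using i by (auto simp: Dop gvio_obs_set_def)
        have fe: "(\<lambda>t. gvio_h RE pE psat n i (gvio_act (\<gamma> t) x0)) =
              (\<lambda>t. (n l - n k) \<bullet> (RE *v w t))"
          by (simp add: fun_eq_iff Dop x0 gvio_h_def gvio_act_def wq inner_diff_left del: transpose_matrix_vector)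
        have bl: "bounded_linear (\<lambda>y. (n l - n k) \<bullet> (RE *v y))"
          by (rule bounded_linear_compose[OF bounded_linear_inner_right matrix_vector_mul_bounded_linear])
        have "((\<lambda>t. (n l - n k) \<bullet> (RE *v w t)) has_vector_derivative (n l - n k) \<bullet> (RE *v (- e))) (at 0)"
          by (rule bounded_linear.has_vector_derivative[OF bl dw])
        moreover have "(n l - n k) \<bullet> (RE *v (- e)) = 0"
          using Neq[OF eV kl] by (simp add: inner_diff_left mv_neg)
        ultimately show ?thesis unfolding fe by (simp add: has_real_derivative_iff_has_vector_derivative)
      qed
    qed
  qed
  have inv: "inf_invariant (gvio_f g) (gvio_obs_set N) (gvio_h RE pE psat n) gvio_act pose_mult H gvio_states x0"
    unfolding inf_invariant_def using dyn obs by blast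
  have Heq: "(if skew g *v snd (fst x0) \<in> null_Ng RE n N \<and> skew g *v fst (snd x0) \<in> null_Ng RE n N
                   then SOg2_semidir_null g (null_Ng RE n N)
                   else translation_group (null_Ng RE n N)) = H"
    by (simp add: H_def C_def V_def)
  show ?thesis unfolding Let_def Heq using ne inv by blast
qed

end
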